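(* Let $\mathcal D$ be a finite nonempty set, and let $\mathcal A^{\mathcal D}_{P,R}$ be the subring of $\mathcal H^{\mathcal D}_{P,R}$ consisting of the free $\mathbb Z$-algebra generated by the decorated planar rooted trees (equivalently, the $\mathbb Z$-span of the planar forests). Then $(e_F)_F$, $F$ running over all planar forests decorated by $\mathcal D$, is a $\mathbb Z$-basis of $\mathcal A^{\mathcal D}_{P,R}$.
   Context: $\mathcal H^{\mathcal D}_{P,R}$ is the free associative unital $\mathbb Q$-algebra on the set of planar rooted trees (finite trees with a root, embedded in the plane, edges oriented away from the root) decorated by $\mathcal D$; its basis is the set of planar forests $t_1\cdots t_n$ ($1$ = empty forest). Coproduct: $\Delta(F)=\sum_cP^c(F)\otimes R^c(F)$ over all cuts $c=(c_i)$ of $F=t_1\cdots t_n$, each $c_i$ being the empty cut of $t_i$ ($P=1,R=t_i$), the total cut ($P=t_i,R=1$), or an admissible cut (a nonempty set of edges of $t_i$ such that every oriented path meets at most one of them, with $R^{c_i}(t_i)$ the component of the root and $P^{c_i}(t_i)$ the left-to-right planar forest of the other components); $P^c(F)=\prod_iP^{c_i}(t_i)$, $R^c(F)=\prod_iR^{c_i}(t_i)$; counit $\varepsilon(F)=0$ for $F\ne1$. $B_d^+$ grafts $t_1\cdots t_n$ (in order) on a new root decorated by $d$; $\bullet_d=B_d^+(1)$; $\gamma_d$ is the linear map with $\gamma_d(1)=0$, $\gamma_d(t_1\cdots t_n)=t_1\cdots t_{n-1}$ if $t_n=\bullet_d$, $0$ otherwise. There is a unique bilinear form $(\,,\,)$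 on $\mathcal H^{\mathcal D}_{P,R}$ with $(1,x)=\varepsilon(x)$, $(x_1x_2,y)=(x_1\otimes x_2,\Delta(y))$ and $(B_d^+(x),y)=(x,\gamma_d(y))$; it is nondegenerate, and $(e_F)_F$ denotes the basis of $\mathcal H^{\mathcal D}_{P,R}$ defined by $(e_F,G)=\delta_{F,G}$ for all planar forests $G$. *)

theory Defs
  imports Main "HOL.Rat"
begin

text \<open>Planar forests
  are lists of such trees; the empty list is the empty forest 1.\<close>

datatype 'd ptree = Node 'd "'d ptree list"

type_synonym 'd forest = "'d ptree list"

fun decs :: "'d ptree \<Rightarrow> 'd set" where
  "decs (Node d ts) = insert d (\<Union> (set (map decs ts)))"

definition forest_in :: "'d set \<Rightarrow> 'd forest \<Rightarrow> bool" where
  "forest_in D F \<longleftrightarrow> (\<forall>t \<in> set F. decs t \<subseteq> D)"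

text \<open>All cuts of a forest, as a list (one entry per cut) of pairs (P^c(F), R^c(F)).
  For each tree t_i = B_d^+(ts) one chooses either the total cut (P = t_i, R = 1),
  or a cut that is empty or admissible; the latter are obtained by choosing, for
  each subtree grafted on the root, either to cut the edge to it (the whole subtree
  goes to P) or to keep the edge and cut inside the subtree (empty or admissible),
  i.e. exactly a cut of the forest ts followed by regrafting the trunk part on the root.
  Pruned parts are collected left to right.\<close>

fun cuts :: "'d forest \<Rightarrow> ('d forest \<times> 'd forest) list" where
  "cuts [] = [([], [])]"
| "cuts (Node d ts # F) =
     concat (map (\<lambda>(P1, R1). map (\<lambda>(P2, R2). (P1 @ P2, R1 @ R2)) (cuts F))
       (([Node d ts], []) # map (\<lambda>(P, R). (P, [Node d R])) (cuts ts)))"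

text \<open>The pairing on planar forests determined by (1,x) = eps(x),
  (x1 x2, y) = (x1 \<otimes> x2, Delta y), (B_d^+(x), y) = (x, gamma_d(y)).\<close>

function pair :: "'d forest \<Rightarrow> 'd forest \<Rightarrow> rat" where
  "pair [] G = (if G = [] then 1 else 0)"
| "pair [Node d ts] G =
     (if G \<noteq> [] \<and> last G = Node d [] then pair ts (butlast G) else 0)"
| "pair (t # t' # F) G =
     sum_list (map (\<lambda>(P, R). pair [t] P * pair (t' # F) R) (cuts G))"
  by pat_completeness auto
termination
  by (relation "measure (\<lambda>(F, G). size_list size F)") auto

text \<open>Elements of H^D_{P,R}: finitely supported rational coefficient functions on
  planar forests decorated by D.\<close>

definition in_H :: "'d set \<Rightarrow> ('d forest \<Rightarrow> rat) \<Rightarrow> bool" where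
  "in_H D x \<longleftrightarrow> finite {F. x F \<noteq> 0} \<and> (\<forall>F. x F \<noteq> 0 \<longrightarrow> forest_in D F)"

definition form :: "('d forest \<Rightarrow> rat) \<Rightarrow> 'd forest \<Rightarrow> rat" where
  "form x G = (\<Sum>F \<in> {F. x F \<noteq> 0}. x F * pair F G)"

definition dual_basis :: "'d set \<Rightarrow> 'd forest \<Rightarrow> ('d forest \<Rightarrow> rat)" where
  "dual_basis D F = (THE x. in_H D x \<and>
      (\<forall>G. forest_in D G \<longrightarrow> form x G = (if G = F then 1 else 0)))"

definition in_A :: "'d set \<Rightarrow> ('d forest \<Rightarrow> rat) \<Rightarrow> bool" where
  "in_A D x \<longleftrightarrow> in_H D x \<and> (\<forall>G. x G \<in> \<int>)"

end

theory Submission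
  imports Defs "Jordan_Normal_Form.Determinant"
begin

fun wt :: "'d ptree \<Rightarrow> nat" and fw :: "'d forest \<Rightarrow> nat" where
  "wt (Node d ts) = Suc (fw ts)"
| "fw [] = 0"
| "fw (t # F) = wt t + fw F"

fun ds :: "nat \<Rightarrow> 'd forest \<Rightarrow> nat list" where
  "ds k [] = []"
| "ds k (Node d ts # F) = k # ds (Suc k) ts @ ds k F"

lemma fw_append[simp]: "fw (F @ G) = fw F + fw G"
  by (induction F) auto

lemma wt_pos: "wt t > 0" by (cases t) auto

lemma fw_zero[simp]: "fw F = 0 \<longleftrightarrow> F = []"
  by (cases F) (auto simp: wt_pos)

lemma ds_append[simp]: "ds k (F @ G) = ds k F @ ds k G"
  by (induction F arbitrary: k rule: ds.induct[of _ k F for k F]) auto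

definition comb :: "('d forest \<times> 'd forest) \<Rightarrow> ('d forest \<times> 'd forest) \<Rightarrow> ('d forest \<times> 'd forest)" where
  "comb a b = (fst a @ fst b, snd a @ snd b)"

lemma cuts_cons: "cuts (t # F) = concat (map (\<lambda>a. map (comb a) (cuts F))
     ((([t], []) # map (\<lambda>(P, R). (P, [Node (case t of Node d _ \<Rightarrow> d) R])) (cuts (case t of Node _ ts \<Rightarrow> ts)))))"
  by (cases t) (auto simp: comb_def case_prod_beta intro!: arg_cong[where f=concat] map_cong)

lemma comb_assoc: "comb a (comb b c) = comb (comb a b) c"
  by (simp add: comb_def)

lemma concat_assoc_aux: "concat (map (\<lambda>a. map (comb a) (concat (map (\<lambda>b. map (comb b) zs) ys))) xs)
  = concat (map (\<lambda>a. map (comb a) zs) (concat (map (\<lambda>a. map (comb a) ys) xs)))"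
  by (induction xs) (simp_all add: map_concat o_def comb_assoc)

lemma cuts_append: "cuts (F1 @ F2) = concat (map (\<lambda>a. map (comb a) (cuts F2)) (cuts F1))"
proof (induction F1)
  case Nil
  then show ?case by (simp add: comb_def)
next
  case (Cons t F1)
  show ?case
    unfolding append_Cons cuts_cons Cons concat_assoc_aux ..
qed

lemma mem_cuts_append: "(P, R) \<in> set (cuts (F1 @ F2)) \<longleftrightarrow>
   (\<exists>P1 R1 P2 R2. (P1, R1) \<in> set (cuts F1) \<and> (P2, R2) \<in> set (cuts F2) \<and> P = P1 @ P2 \<and> R = R1 @ R2)"
  unfolding cuts_append by (force simp: comb_def)

lemma concat_single_aux: "concat (map (\<lambda>x. case f x of (P1, R1) \<Rightarrow> [(P1, R1)]) xs) = map f xs"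
  by (induction xs) (auto split: prod.splits)

lemma cuts_single: "cuts [Node e ts] = ([Node e ts], []) # map (\<lambda>(P, R). (P, [Node e R])) (cuts ts)"
  using concat_single_aux[of "\<lambda>(P, R). (P, [Node e R])" "cuts ts"] by (simp add: o_def)


lemma set_concat_comb: "set (concat (map (\<lambda>a. map (comb a) ys) xs)) = {comb a b | a b. a \<in> set xs \<and> b \<in> set ys}"
  by auto

lemma mem_cuts_cons: "(P, R) \<in> set (cuts (Node d ts # F)) \<longleftrightarrow>
  (\<exists>P2 R2. (P2, R2) \<in> set (cuts F) \<and> ((P = Node d ts # P2 \<and> R = R2) \<or>
     (\<exists>P1 R1. (P1, R1) \<in> set (cuts ts) \<and> P = P1 @ P2 \<and> R = Node d R1 # R2)))"
proof
  assume "(P, R) \<in> set (cuts (Node d ts # F))"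
  then obtain a b where ab: "a \<in> set (([Node d ts], []) # map (\<lambda>(P, R). (P, [Node d R])) (cuts ts))"
    "b \<in> set (cuts F)" "(P, R) = comb a b"
    unfolding cuts_cons set_concat_comb ptree.case by blast
  obtain P2 R2 where b: "b = (P2, R2)" by (cases b)
  from ab(1) have "a = ([Node d ts], []) \<or> a \<in> set (map (\<lambda>(P, R). (P, [Node d R])) (cuts ts))" by simp
  then show "\<exists>P2 R2. (P2, R2) \<in> set (cuts F) \<and> ((P = Node d ts # P2 \<and> R = R2) \<or>
     (\<exists>P1 R1. (P1, R1) \<in> set (cuts ts) \<and> P = P1 @ P2 \<and> R = Node d R1 # R2))"
  proof
    assume "a = ([Node d ts], [])"
    then show ?thesis using ab b by (auto simp: comb_def)
  next
    assume "a \<in> set (map (\<lambda>(P, R). (P, [Node d R])) (cuts ts))"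
    then obtain P1 R1 where "(P1, R1) \<in> set (cuts ts)" "a = (P1, [Node d R1])" by auto
    then show ?thesis using ab b by (auto simp: comb_def)
  qed
next
  assume "\<exists>P2 R2. (P2, R2) \<in> set (cuts F) \<and> ((P = Node d ts # P2 \<and> R = R2) \<or>
     (\<exists>P1 R1. (P1, R1) \<in> set (cuts ts) \<and> P = P1 @ P2 \<and> R = Node d R1 # R2))"
  then obtain P2 R2 where b: "(P2, R2) \<in> set (cuts F)" and
    h: "(P = Node d ts # P2 \<and> R = R2) \<or> (\<exists>P1 R1. (P1, R1) \<in> set (cuts ts) \<and> P = P1 @ P2 \<and> R = Node d R1 # R2)"
    by blast
  have S: "set (cuts (Node d ts # F)) = {comb a b | a b. a \<in> set (([Node d ts], []) # map (\<lambda>(P, R). (P, [Node d R])) (cuts ts)) \<and> b \<in> set (cuts F)}"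
    unfolding cuts_cons set_concat_comb ptree.case ..
  from h show "(P, R) \<in> set (cuts (Node d ts # F))"
  proof
    assume "P = Node d ts # P2 \<and> R = R2"
    then have "(P, R) = comb ([Node d ts], []) (P2, R2)" by (simp add: comb_def)
    moreover have "([Node d ts], []) \<in> set (([Node d ts], []) # map (\<lambda>(P, R). (P, [Node d R])) (cuts ts))" by simp
    ultimately show ?thesis unfolding S using b by blast
  next
    assume "\<exists>P1 R1. (P1, R1) \<in> set (cuts ts) \<and> P = P1 @ P2 \<and> R = Node d R1 # R2"
    then obtain P1 R1 where c: "(P1, R1) \<in> set (cuts ts)" "P = P1 @ P2" "R = Node d R1 # R2" by blast
    then have "(P, R) = comb (P1, [Node d R1]) (P2, R2)" by (simp add: comb_def)
    moreover have "(P1, [Node d R1]) \<in> set (([Node d ts], []) # map (\<lambda>(P, R). (P, [Node d R])) (cuts ts))" using c by force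
    ultimately show ?thesis unfolding S using b by blast
  qed
qed


lemma cuts_cons_cases:
  assumes "(P, R) \<in> set (cuts (Node d ts # F))"
  obtains (total) P2 where "(P2, R) \<in> set (cuts F)" "P = Node d ts # P2"
  | (inner) P1 R1 P2 R2 where "(P1, R1) \<in> set (cuts ts)" "(P2, R2) \<in> set (cuts F)" "P = P1 @ P2" "R = Node d R1 # R2"
  using assms unfolding mem_cuts_cons by blast

lemma cuts_fw: "(P, R) \<in> set (cuts G) \<Longrightarrow> fw P + fw R = fw G"
proof (induction "fw G" arbitrary: G P R rule: less_induct)
  case less
  show ?case
  proof (cases G)
    case Nil
    then show ?thesis using less by simp
  next
    case (Cons t F)
    then obtain d ts where G: "G = Node d ts # F" by (cases t) auto
    have h1: "fw ts < fw G" "fw F < fw G" using G by auto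
    from less.prems[unfolded G] show ?thesis
    proof (cases rule: cuts_cons_cases)
      case (total P2)
      then show ?thesis using less.hyps[OF h1(2) total(1)] G by simp
    next
      case (inner P1 R1 P2 R2)
      then show ?thesis using less.hyps[OF h1(2) inner(2)] less.hyps[OF h1(1) inner(1)] G by simp
    qed
  qed
qed

lemma cuts_decs: "(P, R) \<in> set (cuts G) \<Longrightarrow> forest_in D P \<Longrightarrow> forest_in D R \<Longrightarrow> forest_in D G"
proof (induction "fw G" arbitrary: G P R rule: less_induct)
  case less
  show ?case
  proof (cases G)
    case Nil
    then show ?thesis using less by (simp add: forest_in_def)
  next
    case (Cons t F)
    then obtain d ts where G: "G = Node d ts # F" by (cases t) auto
    have h1: "fw ts < fw G" "fw F < fw G" using G by auto
    from less.prems(1)[unfolded G] show ?thesis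
    proof (cases rule: cuts_cons_cases)
      case (total P2)
      then have "forest_in D P2" using less.prems(2) by (simp add: forest_in_def)
      then have "forest_in D F" using less.hyps[OF h1(2) total(1)] less.prems(3) by simp
      then show ?thesis using G less.prems(2) total by (simp add: forest_in_def)
    next
      case (inner P1 R1 P2 R2)
      have "forest_in D P1" "forest_in D P2" using less.prems(2) inner by (auto simp: forest_in_def)
      moreover have "forest_in D R1" "forest_in D R2" "d \<in> D" using less.prems(3) inner by (auto simp: forest_in_def)
      ultimately have "forest_in D ts" "forest_in D F"
        using less.hyps[OF h1(2) inner(2)] less.hyps[OF h1(1) inner(1)] by auto
      then show ?thesis using G \<open>d \<in> D\<close> by (auto simp: forest_in_def)
    qed
  qed
qed

lemma cuts_Rnil: "(P, []) \<in> set (cuts G) \<Longrightarrow> P = G"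
proof (induction "fw G" arbitrary: G P rule: less_induct)
  case less
  show ?case
  proof (cases G)
    case Nil
    then show ?thesis using less by simp
  next
    case (Cons t F)
    then obtain d ts where G: "G = Node d ts # F" by (cases t) auto
    have h1: "fw ts < fw G" "fw F < fw G" using G by auto
    from less.prems[unfolded G] show ?thesis
    proof (cases rule: cuts_cons_cases)
      case (total P2)
      then show ?thesis using less.hyps[OF h1(2) total(1)] G by simp
    next
      case (inner P1 R1 P2 R2)
      then show ?thesis by simp
    qed
  qed
qed

lemma cuts_Pnil: "([], R) \<in> set (cuts G) \<Longrightarrow> R = G"
proof (induction "fw G" arbitrary: G R rule: less_induct)
  case less
  show ?case
  proof (cases G)
    case Nil
    then show ?thesis using less by simp
  next
    case (Cons t F)
    then obtain d ts where G: "G = Node d ts # F" by (cases t) auto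
    have h1: "fw ts < fw G" "fw F < fw G" using G by auto
    from less.prems[unfolded G] show ?thesis
    proof (cases rule: cuts_cons_cases)
      case (total P2)
      then show ?thesis by simp
    next
      case (inner P1 R1 P2 R2)
      then show ?thesis using less.hyps[OF h1(2), of R2] less.hyps[OF h1(1), of R1] G by simp
    qed
  qed
qed



definition CNT :: "'a list \<Rightarrow> 'a \<Rightarrow> rat" where
  "CNT xs a = sum_list (map (\<lambda>c. if c = a then 1 else 0) xs)"

lemma sum_concat_comb: "sum_list (map h (concat (map (\<lambda>a. map (comb a) ys) xs)))
   = sum_list (map (\<lambda>a. sum_list (map (\<lambda>b. h (comb a b)) ys)) xs)"
  by (induction xs) (simp_all add: o_def)

lemma sum_single: "(\<And>y. y \<in> set xs \<Longrightarrow> y \<noteq> a \<Longrightarrow> f y = 0) \<Longrightarrow>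
   sum_list (map f xs) = CNT xs a * (f a :: rat)"
proof (induction xs)
  case Nil
  then show ?case by (simp add: CNT_def)
next
  case (Cons x xs)
  then have "sum_list (map f xs) = CNT xs a * f a" by simp
  then show ?case using Cons.prems[of x] by (cases "x = a") (simp_all add: CNT_def algebra_simps)
qed

lemma sum_zero: "(\<And>y. y \<in> set xs \<Longrightarrow> f y = 0) \<Longrightarrow> sum_list (map f xs) = (0::rat)"
  by (induction xs) auto

lemma CNT_map: "inj f \<Longrightarrow> CNT (map f xs) (f a) = CNT xs a"
  by (induction xs) (auto simp: CNT_def inj_eq)

lemma CNT_cons: "CNT (x # xs) a = (if x = a then 1 else 0) + CNT xs a"
  by (simp add: CNT_def)

lemma CNT_notin: "a \<notin> set xs \<Longrightarrow> CNT xs a = 0"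
  unfolding CNT_def by (rule sum_zero) auto

lemma CNT_pos: "CNT xs a \<noteq> 0 \<Longrightarrow> a \<in> set xs"
  using CNT_notin by metis

lemma CNT_append_cuts: "CNT (cuts (F1 @ F2)) c =
   sum_list (map (\<lambda>a. sum_list (map (\<lambda>b. if comb a b = c then 1 else 0) (cuts F2))) (cuts F1))"
  unfolding CNT_def cuts_append sum_concat_comb ..

lemma inj_node_map: "inj (\<lambda>(P, R). (P, [Node d R]))"
  by (auto simp: inj_def)

lemma CNT_single_inner: "CNT (cuts [Node d ts]) (P, [Node d S]) = CNT (cuts ts) (P, S)"
proof -
  have "CNT (cuts [Node d ts]) (P, [Node d S]) = CNT (map (\<lambda>(P, R). (P, [Node d R])) (cuts ts)) ((\<lambda>(P, R). (P, [Node d R])) (P, S))"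
    unfolding cuts_single CNT_cons by simp
  also have "\<dots> = CNT (cuts ts) (P, S)" by (rule CNT_map[OF inj_node_map])
  finally show ?thesis .
qed

lemma CNT_comb_left: "sum_list (map (\<lambda>b. if comb (P1, R1) b = (P1 @ P2, R1 @ R2) then 1 else 0) xs) = CNT xs (P2, R2)"
  unfolding CNT_def by (rule arg_cong[where f=sum_list], rule map_cong) (auto simp: comb_def)

lemma CNT_Pnil: "CNT (cuts G) ([], G) = 1"
proof (induction "fw G" arbitrary: G rule: less_induct)
  case less
  show ?case
  proof (cases G)
    case Nil
    then show ?thesis by (simp add: CNT_def)
  next
    case (Cons t F)
    then obtain d ts where G: "G = [Node d ts] @ F" by (cases t) auto
    have h1: "fw ts < fw G" "fw F < fw G" using G by auto
    have "CNT (cuts G) ([], G) = CNT (cuts [Node d ts]) ([], [Node d ts]) *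
       sum_list (map (\<lambda>b. if comb ([], [Node d ts]) b = ([], G) then 1 else 0) (cuts F))"
      unfolding G CNT_append_cuts
    proof (rule sum_single)
      fix y assume y: "y \<in> set (cuts [Node d ts])" "y \<noteq> ([], [Node d ts])"
      show "sum_list (map (\<lambda>b. if comb y b = ([], [Node d ts] @ F) then 1 else 0) (cuts F)) = (0::rat)"
      proof (rule sum_zero)
        fix b assume "b \<in> set (cuts F)"
        show "(if comb y b = ([], [Node d ts] @ F) then 1 else 0) = (0::rat)"
        proof (cases "fst y = []")
          case True
          then have "snd y = [Node d ts]" using cuts_Pnil[of "snd y" "[Node d ts]"] y(1) by (cases y) auto
          then show ?thesis using True y(2) by (cases y) auto
        qed (auto simp: comb_def)
      qed
    qed
    also have "sum_list (map (\<lambda>b. if comb ([], [Node d ts]) b = ([], G) then 1 else 0) (cuts F)) = CNT (cuts F) ([], F)"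
      using CNT_comb_left[of "[]" "[Node d ts]" "[]" F] G by simp
    also have "CNT (cuts [Node d ts]) ([], [Node d ts]) = CNT (cuts ts) ([], ts)"
      by (rule CNT_single_inner)
    finally show ?thesis using less.hyps[OF h1(1)] less.hyps[OF h1(2)] by simp
  qed
qed

lemma CNT_Rnil: "CNT (cuts G) (G, []) = 1"
proof (induction G)
  case Nil
  then show ?case by (simp add: CNT_def)
next
  case (Cons t F)
  obtain d ts where t: "t = Node d ts" by (cases t)
  have G: "t # F = [Node d ts] @ F" using t by simp
  have "CNT (cuts (t # F)) (t # F, []) = CNT (cuts [Node d ts]) ([Node d ts], []) *
     sum_list (map (\<lambda>b. if comb ([Node d ts], []) b = (t # F, []) then 1 else 0) (cuts F))"
    unfolding G CNT_append_cuts
  proof (rule sum_single)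
    fix y assume y: "y \<in> set (cuts [Node d ts])" "y \<noteq> ([Node d ts], [])"
    show "sum_list (map (\<lambda>b. if comb y b = ([Node d ts] @ F, []) then 1 else 0) (cuts F)) = (0::rat)"
    proof (rule sum_zero)
      fix b assume "b \<in> set (cuts F)"
      show "(if comb y b = ([Node d ts] @ F, []) then 1 else 0) = (0::rat)"
      proof (cases "snd y = []")
        case True
        then have "fst y = [Node d ts]" using cuts_Rnil[of "fst y" "[Node d ts]"] y(1) by (cases y) auto
        then show ?thesis using True y(2) by (cases y) auto
      qed (auto simp: comb_def)
    qed
  qed
  also have "sum_list (map (\<lambda>b. if comb ([Node d ts], []) b = (t # F, []) then 1 else 0) (cuts F)) = CNT (cuts F) (F, [])"
    using CNT_comb_left[of "[Node d ts]" "[]" F "[]"] t by simp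
  also have "CNT (cuts [Node d ts]) ([Node d ts], []) = 1"
    unfolding cuts_single CNT_cons by (simp, rule CNT_notin, auto)
  finally show ?case using Cons.IH by simp
qed



fun graft :: "'d forest \<Rightarrow> 'd forest \<Rightarrow> 'd forest" where
  "graft P [] = []"
| "graft P [Node d ts] = [Node d (if ts = [] then P else graft P ts)]"
| "graft P (t # t' # R) = t # graft P (t' # R)"

lemma graft_snoc: "graft P (R' @ [Node e S]) = R' @ [Node e (if S = [] then P else graft P S)]"
proof (induction R')
  case Nil
  then show ?case by simp
next
  case (Cons t R')
  then show ?case by (cases R') auto
qed

lemma ds_single: "ds k [Node e S] = k # ds (Suc k) S"
  by simp

lemma ds_nil_iff[simp]: "ds k F = [] \<longleftrightarrow> F = []"
proof (cases F)
  case (Cons t F')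
  then show ?thesis by (cases t) auto
qed simp

lemma ds_length: "length (ds k F) = fw F"
  by (induction k F rule: ds.induct) auto

lemma ds_ge: "x \<in> set (ds k F) \<Longrightarrow> k \<le> x"
  by (induction k F rule: ds.induct) fastforce+

lemma ds_shift: "ds (k + j) F = map (\<lambda>x. x + j) (ds k F)"
  by (induction k F rule: ds.induct) auto

lemma last_ds_ge: "F \<noteq> [] \<Longrightarrow> k \<le> last (ds k F)"
  using ds_ge[of "last (ds k F)" k F] by simp

lemma ds_graft: "R \<noteq> [] \<Longrightarrow> ds k (graft X R) = ds k R @ ds (Suc (last (ds k R))) X"
proof (induction "fw R" arbitrary: R k rule: less_induct)
  case less
  obtain R' t where R: "R = R' @ [t]" using less.prems by (cases R rule: rev_exhaust) auto
  obtain e S where t: "t = Node e S" by (cases t)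
  show ?case
  proof (cases "S = []")
    case True
    then show ?thesis unfolding R t graft_snoc by simp
  next
    case False
    have h: "fw S < fw R" using R t by simp
    have "ds (Suc k) (graft X S) = ds (Suc k) S @ ds (Suc (last (ds (Suc k) S))) X"
      using less.hyps[OF h False] .
    then show ?thesis unfolding R t graft_snoc using False by simp
  qed
qed

lemma fw_graft: "R \<noteq> [] \<Longrightarrow> fw (graft X R) = fw X + fw R"
  using ds_graft[of R 0 X] ds_length[of 0] ds_length[of _ X] by (metis add.commute length_append)

definition ldiff :: "nat list \<Rightarrow> nat list \<Rightarrow> bool" where
  "ldiff xs ys \<longleftrightarrow> (\<exists>u a b v w. xs = u @ a # v \<and> ys = u @ b # w \<and> a < b)"

lemma ldiff_append: "ldiff xs ys \<Longrightarrow> ldiff (xs @ p) (ys @ q)"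
  unfolding ldiff_def by fastforce

lemma ldiff_prefix: "ldiff xs ys \<Longrightarrow> ldiff (u @ xs) (u @ ys)"
  unfolding ldiff_def by (metis append.assoc)

lemma ldiff_hd: "xs \<noteq> [] \<Longrightarrow> ys \<noteq> [] \<Longrightarrow> hd xs < hd ys \<Longrightarrow> ldiff xs ys"
  unfolding ldiff_def by (metis append_Nil list.collapse)

lemma hd_rev_last: "xs \<noteq> [] \<Longrightarrow> hd (rev xs) = last xs"
  by (simp add: hd_rev)

lemma mem_cuts_single: "(P, R) \<in> set (cuts [Node e ts]) \<longleftrightarrow>
   (P = [Node e ts] \<and> R = []) \<or> (\<exists>S. (P, S) \<in> set (cuts ts) \<and> R = [Node e S])"
  unfolding cuts_single by auto



lemma key:
  "(P, R) \<in> set (cuts G) \<Longrightarrow> R \<noteq> [] \<Longrightarrow> A @ P \<noteq> [] \<Longrightarrow>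
   (A = [] \<and> G = graft P R) \<or> ldiff (rev (ds k G)) (rev (ds k (graft (A @ P) R)))"
proof (induction "fw G" arbitrary: G P R A k rule: less_induct)
  case less
  have "G \<noteq> []" using less.prems(1,2) by auto
  then obtain G1 t where G: "G = G1 @ [t]" by (cases G rule: rev_exhaust) auto
  obtain e ts where t: "t = Node e ts" by (cases t)
  from less.prems(1) obtain P1 R1 P2 R2 where c1: "(P1, R1) \<in> set (cuts G1)" and
    c2: "(P2, R2) \<in> set (cuts [Node e ts])" and PR: "P = P1 @ P2" "R = R1 @ R2"
    unfolding G t mem_cuts_append by blast
  have GG: "rev (ds k G) = rev (ds (Suc k) ts) @ [k] @ rev (ds k G1)" unfolding G t by simp
  from c2[unfolded mem_cuts_single] show ?case
  proof (elim disjE exE conjE)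
    assume P2: "P2 = [Node e ts]" and R2: "R2 = []"
    define k' where "k' = Suc (last (ds k R))"
    have kk: "k < k'" using last_ds_ge[OF less.prems(2), of k] unfolding k'_def by simp
    have "rev (ds k (graft (A @ P) R)) = rev (ds k' (A @ P)) @ rev (ds k R)"
      unfolding ds_graft[OF less.prems(2)] k'_def by simp
    also have "\<dots> = rev (ds k' [Node e ts]) @ rev (ds k' (A @ P1)) @ rev (ds k R)"
      unfolding PR P2 by simp
    finally have E: "rev (ds k (graft (A @ P) R)) = rev (ds k' [Node e ts]) @ rev (ds k' (A @ P1)) @ rev (ds k R)" .
    have "ds k' [Node e ts] = map (\<lambda>x. x + (k' - k)) (ds k [Node e ts])"
      using ds_shift[of k "k' - k" "[Node e ts]"] kk by simp
    moreover have "ldiff (rev zs) (rev (map (\<lambda>x. x + j) zs))" if "zs \<noteq> []" "0 < j" for zs :: "nat list" and j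
      using that by (intro ldiff_hd) (simp_all add: rev_map hd_map)
    ultimately have "ldiff (rev (ds k [Node e ts])) (rev (ds k' [Node e ts]))"
      using kk by (metis ds_nil_iff list.distinct(1) zero_less_diff)
    then have "ldiff (rev (ds k [Node e ts]) @ rev (ds k G1)) (rev (ds k' [Node e ts]) @ (rev (ds k' (A @ P1)) @ rev (ds k R)))"
      by (rule ldiff_append)
    then show ?thesis using E unfolding G t by simp
  next
    fix S assume Q: "(P2, S) \<in> set (cuts ts)" and R2: "R2 = [Node e S]"
    show ?thesis
    proof (cases "P2 = []")
      case True
      then have S: "S = ts" using Q cuts_Pnil by blast
      define k' where "k' = Suc (last (ds k R))"
      have lR: "last (ds k R) = last (ds k [Node e ts])" unfolding PR R2 S by simp
      have "rev (ds k (graft (A @ P) R)) = rev (ds k' (A @ P)) @ rev (ds k R)"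
        unfolding ds_graft[OF less.prems(2)] k'_def by simp
      moreover have Y: "hd (rev (ds k' (A @ P))) \<ge> k'"
        using last_ds_ge[OF less.prems(3), of k'] by (simp only: hd_rev)
      have Yne: "rev (ds k' (A @ P)) \<noteq> []" using less.prems(3) by (simp del: ds_append)
      have Z: "hd (rev (ds k [Node e ts])) = last (ds k R)" using lR by (simp only: hd_rev)
      have "ldiff (rev (ds k [Node e ts])) (rev (ds k' (A @ P)))"
      proof (rule ldiff_hd[OF _ Yne])
        show "rev (ds k [Node e ts]) \<noteq> []" by simp
        show "hd (rev (ds k [Node e ts])) < hd (rev (ds k' (A @ P)))" using Y Z k'_def by linarith
      qed
      then have "ldiff (rev (ds k [Node e ts]) @ rev (ds k G1)) (rev (ds k' (A @ P)) @ rev (ds k R))"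
        by (rule ldiff_append)
      ultimately have "ldiff (rev (ds k [Node e ts]) @ rev (ds k G1)) (rev (ds k (graft (A @ P) R)))"
        by simp
      then show ?thesis unfolding G t by simp
    next
      case False
      show ?thesis
      proof (cases "S = []")
        case True
        then have Pts: "P2 = ts" using Q cuts_Rnil by blast
        have G0: "graft (A @ P) R = R1 @ [Node e (A @ P1 @ ts)]"
          unfolding PR R2 True graft_snoc Pts by simp
        show ?thesis
        proof (cases "A @ P1 = []")
          case True
          then have "A = []" "P1 = []" by auto
          then have "R1 = G1" using c1 cuts_Pnil by blast
          then show ?thesis using G0 \<open>A = []\<close> \<open>P1 = []\<close> unfolding G t by simp
        next
          case False
          have "hd (rev (ds (Suc k) (A @ P1))) \<ge> Suc k"
            using last_ds_ge[OF False, of "Suc k"] by (simp only: hd_rev)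
          then have "ldiff ([k] @ rev (ds k G1)) (rev (ds (Suc k) (A @ P1)) @ [k] @ rev (ds k R1))"
            using False by (intro ldiff_hd) (auto simp: hd_append split: if_splits)
          then have "ldiff (rev (ds (Suc k) ts) @ [k] @ rev (ds k G1)) (rev (ds (Suc k) ts) @ rev (ds (Suc k) (A @ P1)) @ [k] @ rev (ds k R1))"
            by (rule ldiff_prefix)
          then show ?thesis unfolding GG G0 by simp
        qed
      next
        case Sne: False
        have h: "fw ts < fw G" unfolding G t by simp
        have "(A @ P1 = [] \<and> ts = graft P2 S) \<or> ldiff (rev (ds (Suc k) ts)) (rev (ds (Suc k) (graft ((A @ P1) @ P2) S)))"
          using less.hyps[OF h Q Sne, of "A @ P1" "Suc k"] \<open>P2 \<noteq> []\<close> by simp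
        then show ?thesis
        proof
          assume "A @ P1 = [] \<and> ts = graft P2 S"
          then have "A = []" "P1 = []" "ts = graft P2 S" by auto
          then have "R1 = G1" using c1 cuts_Pnil by blast
          then show ?thesis using \<open>A = []\<close> \<open>P1 = []\<close> \<open>ts = graft P2 S\<close> Sne unfolding G t PR R2 graft_snoc by simp
        next
          assume L: "ldiff (rev (ds (Suc k) ts)) (rev (ds (Suc k) (graft ((A @ P1) @ P2) S)))"
          have G0: "rev (ds k (graft (A @ P) R)) = rev (ds (Suc k) (graft ((A @ P1) @ P2) S)) @ [k] @ rev (ds k R1)"
            unfolding PR R2 graft_snoc using Sne by simp
          show ?thesis unfolding GG G0 using ldiff_append[OF L] by blast
        qed
      qed
    qed
  qed
qed



lemma mult_graft: "R \<noteq> [] \<Longrightarrow> CNT (cuts (graft P R)) (P, R) = 1"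
proof (induction "fw R" arbitrary: R rule: less_induct)
  case less
  obtain R1 t where R: "R = R1 @ [t]" using less.prems by (cases R rule: rev_exhaust) auto
  obtain e S where t: "t = Node e S" by (cases t)
  define X where "X = (if S = [] then P else graft P S)"
  have G0: "graft P R = R1 @ [Node e X]" unfolding R t X_def graft_snoc ..
  have RR: "R = R1 @ [Node e S]" unfolding R t ..
  have "CNT (cuts (graft P R)) (P, R) = CNT (cuts (R1 @ [Node e X])) (P, R1 @ [Node e S])"
    using G0 RR by simp
  also have "\<dots> = CNT (cuts R1) ([], R1) *
     sum_list (map (\<lambda>b. if comb ([], R1) b = (P, R1 @ [Node e S]) then 1 else 0) (cuts [Node e X]))"
    unfolding CNT_append_cuts
  proof (rule sum_single)
    fix y assume y: "y \<in> set (cuts R1)" "y \<noteq> ([], R1)"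
    obtain P1 R1' where yy: "y = (P1, R1')" by (cases y)
    show "sum_list (map (\<lambda>b. if comb y b = (P, R1 @ [Node e S]) then 1 else 0) (cuts [Node e X])) = (0::rat)"
    proof (rule sum_zero)
      fix b assume b: "b \<in> set (cuts [Node e X])"
      obtain P2 R2 where bb: "b = (P2, R2)" by (cases b)
      have fwy: "fw P1 + fw R1' = fw R1" using cuts_fw y(1) yy by blast
      have "comb y b \<noteq> (P, R1 @ [Node e S])"
      proof
        assume eq: "comb y b = (P, R1 @ [Node e S])"
        then have eqR: "R1' @ R2 = R1 @ [Node e S]" unfolding yy bb comb_def by simp
        from b[unfolded bb mem_cuts_single] show False
        proof (elim disjE exE conjE)
          assume "R2 = []"
          then have "fw R1' = fw R1 + wt (Node e S)" using eqR by simp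
          then show False using fwy wt_pos[of "Node e S"] by simp
        next
          fix S' assume "R2 = [Node e S']"
          then have "R1' = R1" using eqR by simp
          then have "P1 = []" using fwy by simp
          then show False using y(2) yy \<open>R1' = R1\<close> by simp
        qed
      qed
      then show "(if comb y b = (P, R1 @ [Node e S]) then 1 else 0) = (0::rat)" by simp
    qed
  qed
  also have "sum_list (map (\<lambda>b. if comb ([], R1) b = (P, R1 @ [Node e S]) then 1 else 0) (cuts [Node e X]))
     = CNT (cuts [Node e X]) (P, [Node e S])"
    using CNT_comb_left[of "[]" R1 P "[Node e S]" "cuts [Node e X]"] by simp
  also have "\<dots> = CNT (cuts X) (P, S)" by (rule CNT_single_inner)
  also have "\<dots> = 1"
  proof (cases "S = []")
    case True
    then show ?thesis unfolding X_def using CNT_Rnil by simp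
  next
    case False
    have "fw S < fw R" unfolding R t by simp
    then show ?thesis unfolding X_def using less.hyps[of S] False by simp
  qed
  finally show ?case using CNT_Pnil by simp
qed

lemma graft_in_cuts: assumes "R \<noteq> []" shows "(P, R) \<in> set (cuts (graft P R))"
  using mult_graft[OF assms, of P] by (intro CNT_pos) simp



lemma pair_nil_right: "pair F [] = (if F = [] then 1 else 0)"
proof (cases F)
  case (Cons t F')
  then show ?thesis
  proof (cases F')
    case Nil
    then show ?thesis using Cons by (cases t) simp
  next
    case (Cons t' F'')
    then show ?thesis using \<open>F = t # F'\<close> by (cases t) simp
  qed
qed simp

lemma pair_nil_left: "pair [] G = (if G = [] then 1 else 0)"
  by simp

lemma pair_cons: "F \<noteq> [] \<Longrightarrow> pair (t # F) G = sum_list (map (\<lambda>(P, R). pair [t] P * pair F R) (cuts G))"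
  by (cases F) (simp_all only: pair.simps list.simps simp_thms)

lemma pair_single: "pair [Node d ts] G = (if G \<noteq> [] \<and> last G = Node d [] then pair ts (butlast G) else 0)"
  by simp

lemma sum_list_Ints: "(\<And>x. x \<in> set xs \<Longrightarrow> f x \<in> \<int>) \<Longrightarrow> sum_list (map f xs) \<in> (\<int> :: rat set)"
  by (induction xs) auto

lemma pair_Int: "pair F G \<in> \<int>"
proof (induction "fw F" arbitrary: F G rule: less_induct)
  case less
  show ?case
  proof (cases F)
    case Nil
    then show ?thesis by simp
  next
    case (Cons t F')
    obtain d ts where t: "t = Node d ts" by (cases t)
    show ?thesis
    proof (cases F')
      case Nil
      have "fw ts < fw F" unfolding Cons Nil t by simp
      then have "pair ts (butlast G) \<in> \<int>" using less.hyps by blast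
      then show ?thesis unfolding Cons Nil t pair_single by simp
    next
      case (Cons t' F'')
      have FF: "F = t # t' # F''" using \<open>F = t # F'\<close> Cons by simp
      have lt: "fw [t] < fw F" "fw (t' # F'') < fw F" unfolding FF using wt_pos[of t] wt_pos[of t'] by auto
      show ?thesis unfolding FF pair.simps(3)
      proof (rule sum_list_Ints)
        fix c assume "c \<in> set (cuts G)"
        obtain P R where cc: "c = (P, R)" by (cases c)
        show "(\<lambda>(P, R). pair [t] P * pair (t' # F'') R) c \<in> \<int>"
          unfolding cc using less.hyps[OF lt(1), of P] less.hyps[OF lt(2), of R] by (simp add: Ints_mult)
      qed
    qed
  qed
qed

lemma CNT_Int: "CNT xs a \<in> \<int>"
  unfolding CNT_def by (rule sum_list_Ints) auto

lemma sum_list_nonzero: "sum_list (map f xs) \<noteq> (0::rat) \<Longrightarrow> \<exists>x \<in> set xs. f x \<noteq> 0"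
  by (induction xs) auto

lemma pair_fw: "pair F G \<noteq> 0 \<Longrightarrow> fw F = fw G"
proof (induction "fw F" arbitrary: F G rule: less_induct)
  case less
  show ?case
  proof (cases F)
    case Nil
    then show ?thesis using less.prems by (simp split: if_splits)
  next
    case (Cons t F')
    obtain d ts where t: "t = Node d ts" by (cases t)
    show ?thesis
    proof (cases F')
      case Nil
      have G: "G \<noteq> []" "last G = Node d []" "pair ts (butlast G) \<noteq> 0"
        using less.prems unfolding Cons Nil t by (auto split: if_splits)
      obtain G' where G': "G = G' @ [Node d []]" using G(1,2) by (metis append_butlast_last_id)
      have lt: "fw ts < fw F" unfolding Cons Nil t by simp
      have "fw ts = fw (butlast G)" by (rule less.hyps[OF lt G(3)])
      then have "fw ts = fw G'" using G' by simp
      then have "fw G = fw ts + 1" using G' by simp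
      then show ?thesis unfolding Cons Nil t by simp
    next
      case (Cons t' F'')
      have FF: "F = t # t' # F''" using \<open>F = t # F'\<close> Cons by simp
      obtain c where c: "c \<in> set (cuts G)" "(\<lambda>(P, R). pair [t] P * pair (t' # F'') R) c \<noteq> 0"
        using sum_list_nonzero[of "\<lambda>(P, R). pair [t] P * pair (t' # F'') R" "cuts G"] less.prems FF by auto
      obtain P R where cc: "c = (P, R)" by (cases c)
      have nz: "pair [t] P \<noteq> 0" "pair (t' # F'') R \<noteq> 0" using c(2) cc by auto
      have lt: "fw [t] < fw F" "fw (t' # F'') < fw F" unfolding FF using wt_pos[of t] wt_pos[of t'] by auto
      have "fw [t] = fw P" "fw (t' # F'') = fw R" using less.hyps[OF lt(1) nz(1)] less.hyps[OF lt(2) nz(2)] by auto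
      moreover have "fw P + fw R = fw G" using cuts_fw c(1) cc by blast
      ultimately show ?thesis unfolding FF by simp
    qed
  qed
qed

definition supp :: "('d forest \<Rightarrow> rat) \<Rightarrow> 'd forest set" where
  "supp x = {F. x F \<noteq> 0}"

lemma form_eq: "finite S \<Longrightarrow> supp x \<subseteq> S \<Longrightarrow> form x G = (\<Sum>F\<in>S. x F * pair F G)"
  unfolding form_def supp_def by (rule sum.mono_neutral_left) auto

definition bp :: "'d \<Rightarrow> ('d forest \<Rightarrow> rat) \<Rightarrow> 'd forest \<Rightarrow> rat" where
  "bp e a F = (case F of [Node d ts] \<Rightarrow> if d = e then a ts else 0 | _ \<Rightarrow> 0)"

lemma supp_bp: "supp (bp e a) = (\<lambda>ts. [Node e ts]) ` supp a"
proof -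
  have "F \<in> supp (bp e a) \<longleftrightarrow> F \<in> (\<lambda>ts. [Node e ts]) ` supp a" for F
  proof (cases F)
    case (Cons t F')
    then show ?thesis by (cases t; cases F') (auto simp: supp_def bp_def)
  qed (auto simp: supp_def bp_def)
  then show ?thesis by blast
qed

lemma form_bp_sum: "finite (supp a) \<Longrightarrow> form (bp e a) H = (\<Sum>ts\<in>supp a. a ts * pair [Node e ts] H)"
proof -
  assume fin: "finite (supp a)"
  have "form (bp e a) H = (\<Sum>F\<in>(\<lambda>ts. [Node e ts]) ` supp a. bp e a F * pair F H)"
    by (rule form_eq) (use fin in \<open>simp_all add: supp_bp\<close>)
  also have "\<dots> = (\<Sum>ts\<in>supp a. bp e a [Node e ts] * pair [Node e ts] H)"
    by (subst sum.reindex) (auto simp: inj_on_def)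
  finally show ?thesis by (simp add: bp_def)
qed

lemma form_bp: "finite (supp a) \<Longrightarrow> form (bp e a) H = (if H \<noteq> [] \<and> last H = Node e [] then form a (butlast H) else 0)"
proof -
  assume fin: "finite (supp a)"
  have "form (bp e a) H = (\<Sum>ts\<in>supp a. a ts * (if H \<noteq> [] \<and> last H = Node e [] then pair ts (butlast H) else 0))"
    unfolding form_bp_sum[OF fin] pair_single ..
  also have "\<dots> = (if H \<noteq> [] \<and> last H = Node e [] then (\<Sum>ts\<in>supp a. a ts * pair ts (butlast H)) else 0)"
    by simp
  also have "(\<Sum>ts\<in>supp a. a ts * pair ts (butlast H)) = form a (butlast H)"
    by (rule form_eq[symmetric]) (use fin in auto)
  finally show ?thesis .
qed



definition prodf :: "'d \<Rightarrow> ('d forest \<Rightarrow> rat) \<Rightarrow> ('d forest \<Rightarrow> rat) \<Rightarrow> 'd forest \<Rightarrow> rat" where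
  "prodf e a b F = (case F of Node d ts # F' \<Rightarrow> if d = e then a ts * b F' else 0 | [] \<Rightarrow> 0)"

lemma supp_prodf: "supp (prodf e a b) \<subseteq> (\<lambda>(ts, F'). Node e ts # F') ` (supp a \<times> supp b)"
proof
  fix F assume F: "F \<in> supp (prodf e a b)"
  show "F \<in> (\<lambda>(ts, F'). Node e ts # F') ` (supp a \<times> supp b)"
  proof (cases F)
    case Nil
    then show ?thesis using F by (simp add: supp_def prodf_def)
  next
    case (Cons t F')
    obtain d ts where t: "t = Node d ts" by (cases t)
    have "d = e" "a ts \<noteq> 0" "b F' \<noteq> 0" using F unfolding Cons t supp_def prodf_def by (auto split: if_splits)
    then show ?thesis unfolding Cons t supp_def by force
  qed
qed

lemma sum_list_sum_swap: "sum_list (map (\<lambda>c. \<Sum>s\<in>S. g s c) xs) = (\<Sum>s\<in>S. sum_list (map (g s) xs))"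
  by (induction xs) (simp_all add: sum.distrib)

lemma sum_list_pair_mult: "sum_list (map (\<lambda>(P, R). (x * f P) * (y * g R)) xs) = x * y * sum_list (map (\<lambda>(P, R). f P * g R) xs)"
  for x y :: rat
  by (induction xs) (auto simp: algebra_simps)

lemma form_prodf:
  assumes fa: "finite (supp a)" and fb: "finite (supp b)" and nb: "b [] = 0"
  shows "form (prodf e a b) H = sum_list (map (\<lambda>(P, R). form (bp e a) P * form b R) (cuts H))"
proof -
  let ?S = "supp a \<times> supp b"
  have inj: "inj_on (\<lambda>(ts, F'). Node e ts # F') ?S" by (auto simp: inj_on_def)
  have "form (prodf e a b) H = (\<Sum>F\<in>(\<lambda>(ts, F'). Node e ts # F') ` ?S. prodf e a b F * pair F H)"
    by (rule form_eq) (use fa fb supp_prodf[of e a b] in auto)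
  also have "\<dots> = (\<Sum>p\<in>?S. prodf e a b (Node e (fst p) # snd p) * pair (Node e (fst p) # snd p) H)"
    by (subst sum.reindex[OF inj]) (simp add: case_prod_beta)
  also have "\<dots> = (\<Sum>p\<in>?S. sum_list (map (\<lambda>(P, R). (a (fst p) * pair [Node e (fst p)] P) * (b (snd p) * pair (snd p) R)) (cuts H)))"
  proof (rule sum.cong[OF refl])
    fix p assume p: "p \<in> ?S"
    then have "snd p \<noteq> []" using nb by (auto simp: supp_def)
    then have "pair (Node e (fst p) # snd p) H = sum_list (map (\<lambda>(P, R). pair [Node e (fst p)] P * pair (snd p) R) (cuts H))"
      by (rule pair_cons)
    then show "prodf e a b (Node e (fst p) # snd p) * pair (Node e (fst p) # snd p) H =
      sum_list (map (\<lambda>(P, R). (a (fst p) * pair [Node e (fst p)] P) * (b (snd p) * pair (snd p) R)) (cuts H))"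
    proof -
      have "prodf e a b (Node e (fst p) # snd p) = a (fst p) * b (snd p)" by (simp add: prodf_def)
      then show ?thesis using \<open>pair (Node e (fst p) # snd p) H = _\<close>
        by (simp only: sum_list_pair_mult)
    qed
  qed
  also have "\<dots> = sum_list (map (\<lambda>c. \<Sum>p\<in>?S. (\<lambda>(P, R). (a (fst p) * pair [Node e (fst p)] P) * (b (snd p) * pair (snd p) R)) c) (cuts H))"
    by (rule sum_list_sum_swap[symmetric])
  also have "\<dots> = sum_list (map (\<lambda>(P, R). form (bp e a) P * form b R) (cuts H))"
  proof (rule arg_cong[where f = sum_list], rule map_cong[OF refl])
    fix c :: "'a forest \<times> 'a forest"
    obtain P R where c: "c = (P, R)" by (cases c)
    have "(\<Sum>p\<in>?S. (a (fst p) * pair [Node e (fst p)] P) * (b (snd p) * pair (snd p) R))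
       = (\<Sum>ts\<in>supp a. a ts * pair [Node e ts] P) * (\<Sum>F'\<in>supp b. b F' * pair F' R)"
      by (simp add: sum_product sum.cartesian_product case_prod_beta)
    also have "\<dots> = form (bp e a) P * form b R"
      using form_bp_sum[OF fa] form_eq[OF fb, of b R] by simp
    finally show "(\<Sum>p\<in>?S. (\<lambda>(P, R). (a (fst p) * pair [Node e (fst p)] P) * (b (snd p) * pair (snd p) R)) c) =
      (\<lambda>(P, R). form (bp e a) P * form b R) c" unfolding c by simp
  qed
  finally show ?thesis .
qed



lemma cuts_decs_rev: "(P, R) \<in> set (cuts G) \<Longrightarrow> forest_in D G \<Longrightarrow> forest_in D P \<and> forest_in D R"
proof (induction "fw G" arbitrary: G P R rule: less_induct)
  case less
  show ?case
  proof (cases G)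
    case Nil
    then show ?thesis using less by (simp add: forest_in_def)
  next
    case (Cons t F)
    then obtain d ts where G: "G = Node d ts # F" by (cases t) auto
    have h1: "fw ts < fw G" "fw F < fw G" using G by auto
    have DG: "d \<in> D" "forest_in D ts" "forest_in D F" using less.prems(2) unfolding G
      by (auto simp: forest_in_def)
    from less.prems(1)[unfolded G] show ?thesis
    proof (cases rule: cuts_cons_cases)
      case (total P2)
      have "forest_in D P2" "forest_in D R" using less.hyps[OF h1(2) total(1) DG(3)] by auto
      then show ?thesis using total less.prems(2) G by (auto simp: forest_in_def)
    next
      case (inner P1 R1 P2 R2)
      have "forest_in D P1" "forest_in D R1" using less.hyps[OF h1(1) inner(1) DG(2)] by auto
      moreover have "forest_in D P2" "forest_in D R2" using less.hyps[OF h1(2) inner(2) DG(3)] by auto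
      ultimately show ?thesis using inner DG(1) by (auto simp: forest_in_def)
    qed
  qed
qed

lemma finite_forests_le: "finite D \<Longrightarrow> finite {F. forest_in D F \<and> fw F \<le> n}"
proof (induction n)
  case 0
  have "{F. forest_in D F \<and> fw F \<le> 0} \<subseteq> {[]}" by auto
  then show ?case using finite_subset by blast
next
  case (Suc n)
  let ?S = "{F. forest_in D F \<and> fw F \<le> n}"
  have "{F. forest_in D F \<and> fw F \<le> Suc n} \<subseteq> insert [] ((\<lambda>(d, ts, F). Node d ts # F) ` (D \<times> ?S \<times> ?S))"
  proof
    fix F assume F: "F \<in> {F. forest_in D F \<and> fw F \<le> Suc n}"
    show "F \<in> insert [] ((\<lambda>(d, ts, F). Node d ts # F) ` (D \<times> ?S \<times> ?S))"
    proof (cases F)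
      case (Cons t F')
      obtain d ts where t: "t = Node d ts" by (cases t)
      have "d \<in> D" "forest_in D ts" "forest_in D F'" "fw ts \<le> n" "fw F' \<le> n"
        using F unfolding Cons t by (auto simp: forest_in_def)
      then show ?thesis unfolding Cons t by force
    qed simp
  qed
  moreover have "finite (insert [] ((\<lambda>(d, ts, F). Node d ts # F) ` (D \<times> ?S \<times> ?S)))"
    using Suc by simp
  ultimately show ?case using finite_subset by blast
qed

lemma finite_forests: "finite D \<Longrightarrow> finite {F. forest_in D F \<and> fw F = n}"
  by (rule finite_subset[OF _ finite_forests_le[of D n]]) auto

lemma decomp:
  assumes "G \<noteq> []" "\<And>e. last G \<noteq> Node e []"
  shows "\<exists>P' e R. R \<noteq> [] \<and> G = graft (P' @ [Node e []]) R"
  using assms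
proof (induction "fw G" arbitrary: G rule: less_induct)
  case less
  obtain K t where G: "G = K @ [t]" using less.prems(1) by (cases G rule: rev_exhaust) auto
  obtain d H where t: "t = Node d H" by (cases t)
  have H: "H \<noteq> []" using less.prems(2)[of d] unfolding G t by auto
  show ?case
  proof (cases "\<exists>e. last H = Node e []")
    case True
    then obtain e where e: "last H = Node e []" by blast
    have "graft (butlast H @ [Node e []]) (K @ [Node d []]) = G"
      unfolding graft_snoc G t using e H by (simp add: append_butlast_last_id[OF H, unfolded e])
    then show ?thesis by blast
  next
    case False
    have "fw H < fw G" unfolding G t by simp
    then obtain P' e R' where R': "R' \<noteq> []" "H = graft (P' @ [Node e []]) R'"
      using less.hyps[of H] H False by blast
    have "graft (P' @ [Node e []]) (K @ [Node d R']) = G"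
      unfolding graft_snoc G t using R' by simp
    then show ?thesis by blast
  qed
qed

definition rel :: "('d forest \<times> 'd forest) set" where
  "rel = inv_image (less_than <*lex*> lex less_than) (\<lambda>G. (fw G, rev (ds 0 G)))"

lemma wf_rel: "wf rel"
  unfolding rel_def by (intro wf_inv_image wf_lex_prod wf_less_than wf_lex)

lemma rel_fw: "fw G' < fw G \<Longrightarrow> (G', G) \<in> rel"
  unfolding rel_def by simp

lemma rel_ldiff: "fw G' = fw G \<Longrightarrow> ldiff (rev (ds 0 G')) (rev (ds 0 G)) \<Longrightarrow> (G', G) \<in> rel"
  unfolding rel_def ldiff_def by (auto simp: lex_conv ds_length)



definition realizes :: "'d set \<Rightarrow> 'd forest \<Rightarrow> ('d forest \<Rightarrow> rat) \<Rightarrow> bool" where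
  "realizes D G x \<longleftrightarrow> finite (supp x) \<and> (\<forall>F\<in>supp x. forest_in D F \<and> fw F = fw G) \<and>
     (\<forall>F. x F \<in> \<int>) \<and> (\<forall>H. form x H = (if H = G then 1 else 0))"

lemma realizes_nil: "realizes D [] (\<lambda>F. if F = [] then 1 else 0)"
proof -
  have S: "supp (\<lambda>F. if F = [] then 1 else 0 :: rat) = {[]}" by (auto simp: supp_def)
  have "form (\<lambda>F. if F = [] then 1 else 0) H = (if H = [] then 1 else 0)" for H :: "'a forest"
    by (subst form_eq[of "{[]}"]) (auto simp: S)
  then show ?thesis unfolding realizes_def S by (auto simp: forest_in_def)
qed

lemma form_bp_real: "realizes D G' a \<Longrightarrow> form (bp e a) H = (if H = G' @ [Node e []] then 1 else 0)"
proof -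
  assume r: "realizes D G' a"
  then have "finite (supp a)" by (simp add: realizes_def)
  then have "form (bp e a) H = (if H \<noteq> [] \<and> last H = Node e [] then form a (butlast H) else 0)"
    by (rule form_bp)
  also have "\<dots> = (if H = G' @ [Node e []] then 1 else 0)"
    using r unfolding realizes_def by (auto simp: append_butlast_last_id) (metis append_butlast_last_id)
  finally show ?thesis .
qed

lemma realizes_bp: "realizes D G' a \<Longrightarrow> e \<in> D \<Longrightarrow> realizes D (G' @ [Node e []]) (bp e a)"
proof -
  assume r: "realizes D G' a" and e: "e \<in> D"
  have fin: "finite (supp (bp e a))" using r unfolding supp_bp realizes_def by simp
  have "\<forall>F\<in>supp (bp e a). forest_in D F \<and> fw F = fw (G' @ [Node e []])"
    using r e unfolding supp_bp realizes_def by (auto simp: forest_in_def)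
  moreover have "\<forall>F. bp e a F \<in> \<int>"
  proof
    fix F show "bp e a F \<in> \<int>" using r unfolding bp_def realizes_def
      by (auto split: list.splits ptree.splits)
  qed
  ultimately show ?thesis using fin form_bp_real[OF r] unfolding realizes_def by blast
qed



lemma realize_exists:
  assumes finD: "finite D"
  shows "forest_in D G \<Longrightarrow> \<exists>x. realizes D G x"
proof (induction G rule: wf_induct[OF wf_rel])
  case (1 G)
  note IH = "1.IH"
  show ?case
  proof (cases "G = []")
    case True
    then show ?thesis using realizes_nil by blast
  next
    case Gne: False
    show ?thesis
    proof (cases "\<exists>e. last G = Node e []")
      case True
      then obtain e where e: "last G = Node e []" by blast
      define G' where "G' = butlast G"
      have GG: "G = G' @ [Node e []]" unfolding G'_def using Gne e by (metis append_butlast_last_id)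
      have DG: "forest_in D G'" "e \<in> D" using "1.prems" unfolding GG by (auto simp: forest_in_def)
      have "(G', G) \<in> rel" by (rule rel_fw) (simp add: GG)
      then obtain a where "realizes D G' a" using IH DG(1) by blast
      then have "realizes D (G' @ [Node e []]) (bp e a)" using DG(2) by (rule realizes_bp)
      then show ?thesis unfolding GG by blast
    next
      case False
      then obtain P' e R where R: "R \<noteq> []" "G = graft (P' @ [Node e []]) R"
        using decomp[OF Gne] by blast
      define P where "P = P' @ [Node e []]"
      have GPR: "G = graft P R" using R P_def by simp
      have inc: "(P, R) \<in> set (cuts G)" unfolding GPR by (rule graft_in_cuts[OF R(1)])
      have DPR: "forest_in D P" "forest_in D R" using cuts_decs_rev[OF inc "1.prems"] by auto
      have DP': "forest_in D P'" "e \<in> D" using DPR(1) unfolding P_def by (auto simp: forest_in_def)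
      have fwG: "fw G = fw P + fw R" unfolding GPR using fw_graft[OF R(1)] .
      have fwP: "fw P = fw P' + 1" unfolding P_def by simp
      have "fw R > 0" using R(1) fw_zero[of R] by linarith
      then have lt: "fw P' < fw G" "fw R < fw G" using fwG fwP by auto
      obtain a where a: "realizes D P' a" using IH[rule_format, OF rel_fw[OF lt(1)] DP'(1)] by blast
      obtain b where b: "realizes D R b" using IH[rule_format, OF rel_fw[OF lt(2)] DPR(2)] by blast
      have fa: "finite (supp a)" and fb: "finite (supp b)" using a b by (auto simp: realizes_def)
      have b0: "b [] = 0"
      proof (rule ccontr)
        assume "b [] \<noteq> 0"
        then have "[] \<in> supp b" by (simp add: supp_def)
        then have "fw ([] :: 'a forest) = fw R" using b by (auto simp: realizes_def)
        then show False using R(1) by simp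
      qed
      define y where "y = prodf e a b"
      have fy: "form y H = CNT (cuts H) (P, R)" for H
      proof -
        have "form y H = sum_list (map (\<lambda>(P'', R''). form (bp e a) P'' * form b R'') (cuts H))"
          unfolding y_def by (rule form_prodf[OF fa fb b0])
        also have "\<dots> = CNT (cuts H) (P, R)"
          unfolding CNT_def
        proof (rule arg_cong[where f = sum_list], rule map_cong[OF refl])
          fix c :: "'a forest \<times> 'a forest"
          obtain P'' R'' where c: "c = (P'', R'')" by (cases c)
          show "(\<lambda>(P'', R''). form (bp e a) P'' * form b R'') c = (if c = (P, R) then 1 else 0)"
            unfolding c using form_bp_real[OF a, of e P''] b unfolding realizes_def P_def by simp
        qed
        finally show ?thesis .
      qed
      define T where "T = {H. (P, R) \<in> set (cuts H)} - {G}"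
      have Tsub: "T \<subseteq> {H. forest_in D H \<and> fw H = fw G}"
      proof
        fix H assume "H \<in> T"
        then have "(P, R) \<in> set (cuts H)" unfolding T_def by simp
        then show "H \<in> {H. forest_in D H \<and> fw H = fw G}"
          using cuts_decs[OF _ DPR] cuts_fw[of P R H] fwG by auto
      qed
      have finT: "finite T" by (rule finite_subset[OF Tsub finite_forests[OF finD]])
      have Trel: "(H, G) \<in> rel \<and> forest_in D H" if H: "H \<in> T" for H
      proof -
        have HPR: "(P, R) \<in> set (cuts H)" "H \<noteq> G" using H unfolding T_def by auto
        have "P \<noteq> []" unfolding P_def by simp
        then have "([] = [] \<and> H = graft P R) \<or> ldiff (rev (ds 0 H)) (rev (ds 0 (graft ([] @ P) R)))"
          using key[OF HPR(1) R(1), of "[]" 0] by simp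
        then have "ldiff (rev (ds 0 H)) (rev (ds 0 G))" using HPR(2) GPR by auto
        moreover have "fw H = fw G" using H Tsub by auto
        ultimately show ?thesis using rel_ldiff H Tsub by blast
      qed
      have "\<forall>H\<in>T. \<exists>z. realizes D H z"
        using Trel IH by blast
      then obtain z where z: "\<And>H. H \<in> T \<Longrightarrow> realizes D H (z H)" by metis
      define c where "c H = CNT (cuts H) (P, R)" for H
      define x where "x F = y F - (\<Sum>H\<in>T. c H * z H F)" for F
      define U where "U = supp y \<union> (\<Union>H\<in>T. supp (z H))"
      have supy: "supp y \<subseteq> (\<lambda>(ts, F'). Node e ts # F') ` (supp a \<times> supp b)"
        unfolding y_def by (rule supp_prodf)
      have finy: "finite (supp y)" using finite_subset[OF supy] fa fb by blast
      have finU: "finite U" unfolding U_def using finy finT z by (auto simp: realizes_def)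
      have suppx: "supp x \<subseteq> U"
      proof
        fix F assume "F \<in> supp x"
        then have "x F \<noteq> 0" by (simp add: supp_def)
        then show "F \<in> U" unfolding U_def x_def supp_def
          by (auto intro: ccontr simp: sum.neutral)
      qed
      have suppD: "forest_in D F \<and> fw F = fw G" if F: "F \<in> supp x" for F
      proof -
        have "F \<in> U" using F suppx by blast
        then show ?thesis unfolding U_def
        proof
          assume "F \<in> supp y"
          then obtain ts F' where tsF: "F = Node e ts # F'" "ts \<in> supp a" "F' \<in> supp b" using supy by auto
          have "forest_in D ts" "fw ts = fw P'" using a tsF(2) by (auto simp: realizes_def)
          moreover have "forest_in D F'" "fw F' = fw R" using b tsF(3) by (auto simp: realizes_def)
          ultimately show ?thesis using tsF(1) DP'(2) fwG fwP by (auto simp: forest_in_def)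
        next
          assume "F \<in> (\<Union>H\<in>T. supp (z H))"
          then obtain H where "H \<in> T" "F \<in> supp (z H)" by blast
          then show ?thesis using z[of H] Tsub by (auto simp: realizes_def)
        qed
      qed
      have intx: "x F \<in> \<int>" for F
      proof -
        have "y F \<in> \<int>" using a b unfolding y_def prodf_def realizes_def
          by (auto split: list.splits ptree.splits intro: Ints_mult)
        moreover have "(\<Sum>H\<in>T. c H * z H F) \<in> \<int>"
          using z CNT_Int unfolding c_def realizes_def by (auto intro!: Ints_sum Ints_mult)
        ultimately show ?thesis unfolding x_def by (rule Ints_diff)
      qed
      have formx: "form x H' = (if H' = G then 1 else 0)" for H'
      proof -
        have "form x H' = (\<Sum>F\<in>U. x F * pair F H')" by (rule form_eq[OF finU suppx])
        also have "\<dots> = (\<Sum>F\<in>U. y F * pair F H') - (\<Sum>F\<in>U. \<Sum>H\<in>T. c H * (z H F * pair F H'))"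
          unfolding x_def by (simp add: algebra_simps sum_subtractf sum_distrib_left sum_distrib_right)
        also have "(\<Sum>F\<in>U. \<Sum>H\<in>T. c H * (z H F * pair F H')) = (\<Sum>H\<in>T. c H * (\<Sum>F\<in>U. z H F * pair F H'))"
          by (subst sum.swap) (simp add: sum_distrib_left)
        also have "(\<Sum>F\<in>U. y F * pair F H') = form y H'"
          by (rule form_eq[symmetric, OF finU]) (auto simp: U_def)
        also have "(\<Sum>H\<in>T. c H * (\<Sum>F\<in>U. z H F * pair F H')) = (\<Sum>H\<in>T. c H * form (z H) H')"
        proof (rule sum.cong[OF refl])
          fix H assume H: "H \<in> T"
          have "form (z H) H' = (\<Sum>F\<in>U. z H F * pair F H')"
            by (rule form_eq[OF finU]) (use H in \<open>auto simp: U_def\<close>)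
          then show "c H * (\<Sum>F\<in>U. z H F * pair F H') = c H * form (z H) H'" by simp
        qed
        also have "(\<Sum>H\<in>T. c H * form (z H) H') = (\<Sum>H\<in>T. if H' = H then c H else 0)"
          by (rule sum.cong[OF refl]) (use z in \<open>auto simp: realizes_def\<close>)
        also have "\<dots> = (if H' \<in> T then c H' else 0)"
          using finT by (simp add: sum.delta)
        finally have fx: "form x H' = c H' - (if H' \<in> T then c H' else 0)" unfolding fy c_def .
        show ?thesis
        proof (cases "H' = G")
          case True
          then have "H' \<notin> T" unfolding T_def by simp
          moreover have "c H' = 1" unfolding c_def True GPR by (rule mult_graft[OF R(1)])
          ultimately show ?thesis using fx True by simp
        next
          case False
          show ?thesis
          proof (cases "H' \<in> T")
            case True
            then show ?thesis using fx False by simp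
          next
            case nT: False
            then have "(P, R) \<notin> set (cuts H')" using False unfolding T_def by simp
            then have "c H' = 0" unfolding c_def by (rule CNT_notin)
            then show ?thesis using fx False nT by simp
          qed
        qed
      qed
      have "realizes D G x"
        unfolding realizes_def using finite_subset[OF suppx finU] suppD intx formx by blast
      then show ?thesis by blast
    qed
  qed
qed



lemma sum_nth_set: "distinct bs \<Longrightarrow> (\<Sum>k\<in>{0..<length bs}. f (bs ! k)) = (\<Sum>F\<in>set bs. f F)"
  for f :: "'a \<Rightarrow> rat"
proof -
  assume d: "distinct bs"
  have "(\<Sum>k\<in>{0..<length bs}. f (bs ! k)) = sum_list (map f bs)"
    by (simp add: sum_list_sum_nth)
  also have "\<dots> = (\<Sum>F\<in>set bs. f F)" using d by (simp add: sum_list_distinct_conv_sum_set)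
  finally show ?thesis .
qed

lemma inj_form:
  assumes finD: "finite D" and xH: "in_H D x" and x0: "\<And>G. forest_in D G \<Longrightarrow> form x G = 0"
  shows "x F0 = 0"
proof (rule ccontr)
  assume nz: "x F0 \<noteq> 0"
  define n where "n = fw F0"
  define B where "B = {F. forest_in D F \<and> fw F = n}"
  have finB: "finite B" unfolding B_def by (rule finite_forests[OF finD])
  have finx: "finite (supp x)" and Dx: "\<And>F. F \<in> supp x \<Longrightarrow> forest_in D F"
    using xH unfolding in_H_def supp_def by auto
  have F0B: "F0 \<in> B" unfolding B_def n_def using Dx[of F0] nz by (simp add: supp_def)
  obtain bs where bs: "set bs = B" "distinct bs" using finite_distinct_list[OF finB] by blast
  define m where "m = length bs"
  have bsB: "bs ! k \<in> B" if "k < m" for k using bs that unfolding m_def by auto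
  have "\<forall>k<m. \<exists>z. realizes D (bs ! k) z"
    using realize_exists[OF finD] bsB unfolding B_def by blast
  then obtain e where e: "\<And>k. k < m \<Longrightarrow> realizes D (bs ! k) (e k)" by metis
  have esupp: "supp (e k) \<subseteq> B" if "k < m" for k
    using e[OF that] bsB[OF that] unfolding realizes_def B_def by auto
  define E where "E = mat m m (\<lambda>(i, j). e i (bs ! j))"
  define M where "M = mat m m (\<lambda>(i, j). pair (bs ! i) (bs ! j))"
  define V where "V = mat 1 m (\<lambda>(i, j). x (bs ! j))"
  have E: "E \<in> carrier_mat m m" and M: "M \<in> carrier_mat m m" and V: "V \<in> carrier_mat 1 m"
    unfolding E_def M_def V_def by auto
  have sumB: "(\<Sum>k\<in>{0..<m}. f (bs ! k)) = (\<Sum>F\<in>B. f F)" for f :: "'a forest \<Rightarrow> rat"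
    using sum_nth_set[OF bs(2), of f] bs(1) unfolding m_def by simp
  have EM: "E * M = 1\<^sub>m m"
  proof (rule eq_matI)
    fix i j assume ij: "i < dim_row (1\<^sub>m m :: rat mat)" "j < dim_col (1\<^sub>m m :: rat mat)"
    then have i: "i < m" and j: "j < m" by auto
    have "(E * M) $$ (i, j) = (\<Sum>k\<in>{0..<m}. e i (bs ! k) * pair (bs ! k) (bs ! j))"
      using i j unfolding E_def M_def by (simp add: scalar_prod_def)
    also have "\<dots> = (\<Sum>F\<in>B. e i F * pair F (bs ! j))" by (rule sumB)
    also have "\<dots> = form (e i) (bs ! j)" by (rule form_eq[symmetric, OF finB esupp[OF i]])
    also have "\<dots> = (if bs ! j = bs ! i then 1 else 0)" using e[OF i] unfolding realizes_def by simp
    also have "\<dots> = (if i = j then 1 else 0)" using bs(2) i j unfolding m_def by (auto simp: nth_eq_iff_index_eq)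
    finally show "(E * M) $$ (i, j) = 1\<^sub>m m $$ (i, j)" using i j by simp
  qed (use E M in auto)
  have ME: "M * E = 1\<^sub>m m" by (rule mat_mult_left_right_inverse[OF E M EM])
  have formB: "form x H = (\<Sum>F\<in>B. x F * pair F H)" if H: "H \<in> B" for H
  proof -
    have "form x H = (\<Sum>F\<in>supp x \<union> B. x F * pair F H)" by (rule form_eq) (use finx finB in auto)
    also have "\<dots> = (\<Sum>F\<in>B. x F * pair F H)"
    proof (rule sum.mono_neutral_right)
      show "finite (supp x \<union> B)" using finx finB by simp
      show "B \<subseteq> supp x \<union> B" by blast
      show "\<forall>F\<in>supp x \<union> B - B. x F * pair F H = 0"
      proof
        fix F assume F: "F \<in> supp x \<union> B - B"
        then have "forest_in D F" "F \<notin> B" using Dx by auto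
        then have "fw F \<noteq> fw H" using H unfolding B_def by auto
        then have "pair F H = 0" using pair_fw by blast
        then show "x F * pair F H = 0" by simp
      qed
    qed
    finally show ?thesis .
  qed
  have VM: "V * M = 0\<^sub>m 1 m"
  proof (rule eq_matI)
    fix i j assume ij: "i < dim_row (0\<^sub>m 1 m :: rat mat)" "j < dim_col (0\<^sub>m 1 m :: rat mat)"
    then have i: "i = 0" and j: "j < m" by auto
    have "(V * M) $$ (i, j) = (\<Sum>k\<in>{0..<m}. x (bs ! k) * pair (bs ! k) (bs ! j))"
      using i j unfolding V_def M_def by (simp add: scalar_prod_def)
    also have "\<dots> = (\<Sum>F\<in>B. x F * pair F (bs ! j))" by (rule sumB)
    also have "\<dots> = form x (bs ! j)" using formB[OF bsB[OF j]] by simp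
    also have "\<dots> = 0" using x0 bsB[OF j] unfolding B_def by blast
    finally show "(V * M) $$ (i, j) = 0\<^sub>m 1 m $$ (i, j)" using i j by simp
  qed (use V M in auto)
  have "V = V * (M * E)" using V by (simp add: ME)
  also have "\<dots> = (V * M) * E" using V M E by simp
  also have "\<dots> = 0\<^sub>m 1 m" using E by (simp add: VM)
  finally have V0: "V = 0\<^sub>m 1 m" .
  obtain k where k: "k < m" "bs ! k = F0" using F0B bs unfolding m_def by (metis in_set_conv_nth)
  have "V $$ (0, k) = x F0" using k unfolding V_def by simp
  moreover have "V $$ (0, k) = 0" using k V0 by simp
  ultimately show False using nz by simp
qed



lemma sum_nz: "(\<Sum>F\<in>S. a F * f F) \<noteq> (0::rat) \<Longrightarrow> \<exists>F\<in>S. f F \<noteq> 0"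
proof (rule ccontr)
  assume h: "(\<Sum>F\<in>S. a F * f F) \<noteq> 0" "\<not> (\<exists>F\<in>S. f F \<noteq> 0)"
  then have "(\<Sum>F\<in>S. a F * f F) = 0" by (intro sum.neutral) auto
  then show False using h by simp
qed

lemma form_lincomb:
  assumes finS: "finite S" and fin: "\<And>F. F \<in> S \<Longrightarrow> finite (supp (y F))"
  shows "form (\<lambda>G. \<Sum>F\<in>S. a F * y F G) H = (\<Sum>F\<in>S. a F * form (y F) H)"
proof -
  define U where "U = (\<Union>F\<in>S. supp (y F))"
  have finU: "finite U" unfolding U_def using finS fin by auto
  have sU: "supp (\<lambda>G. \<Sum>F\<in>S. a F * y F G) \<subseteq> U"
  proof
    fix G assume "G \<in> supp (\<lambda>G. \<Sum>F\<in>S. a F * y F G)"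
    then have "(\<Sum>F\<in>S. a F * y F G) \<noteq> 0" by (simp add: supp_def)
    then obtain F where "F \<in> S" "y F G \<noteq> 0" using sum_nz[where f="\<lambda>F. y F G"] by blast
    then show "G \<in> U" unfolding U_def supp_def by auto
  qed
  have "form (\<lambda>G. \<Sum>F\<in>S. a F * y F G) H = (\<Sum>G\<in>U. (\<Sum>F\<in>S. a F * y F G) * pair G H)"
    by (rule form_eq[OF finU sU])
  also have "\<dots> = (\<Sum>F\<in>S. a F * (\<Sum>G\<in>U. y F G * pair G H))"
    unfolding sum_distrib_right
  proof -
    have "(\<Sum>G\<in>U. \<Sum>F\<in>S. a F * y F G * pair G H) = (\<Sum>F\<in>S. \<Sum>G\<in>U. a F * y F G * pair G H)"
      by (rule sum.swap)
    also have "\<dots> = (\<Sum>F\<in>S. a F * (\<Sum>G\<in>U. y F G * pair G H))"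
      by (simp add: sum_distrib_left mult.assoc)
    finally show "(\<Sum>G\<in>U. \<Sum>F\<in>S. a F * y F G * pair G H) = (\<Sum>F\<in>S. a F * (\<Sum>G\<in>U. y F G * pair G H))" .
  qed
  also have "\<dots> = (\<Sum>F\<in>S. a F * form (y F) H)"
  proof (rule sum.cong[OF refl])
    fix F assume "F \<in> S"
    then have "form (y F) H = (\<Sum>G\<in>U. y F G * pair G H)" by (intro form_eq[OF finU]) (auto simp: U_def)
    then show "a F * (\<Sum>G\<in>U. y F G * pair G H) = a F * form (y F) H" by simp
  qed
  finally show ?thesis .
qed

lemma form_diff:
  assumes "finite (supp x1)" "finite (supp x2)"
  shows "form (\<lambda>F. x1 F - x2 F) H = form x1 H - form x2 H"
proof -
  let ?U = "supp x1 \<union> supp x2"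
  have "form (\<lambda>F. x1 F - x2 F) H = (\<Sum>F\<in>?U. (x1 F - x2 F) * pair F H)"
    by (rule form_eq) (use assms in \<open>auto simp: supp_def\<close>)
  also have "\<dots> = (\<Sum>F\<in>?U. x1 F * pair F H) - (\<Sum>F\<in>?U. x2 F * pair F H)"
    by (simp add: algebra_simps sum_subtractf)
  also have "\<dots> = form x1 H - form x2 H"
    using form_eq[of ?U x1 H] form_eq[of ?U x2 H] assms by auto
  finally show ?thesis .
qed

lemma in_H_supp: "in_H D x \<longleftrightarrow> finite (supp x) \<and> (\<forall>F\<in>supp x. forest_in D F)"
  unfolding in_H_def supp_def by auto

lemma dual_basis_realizes:
  assumes finD: "finite D" and F: "forest_in D F"
  shows "realizes D F (dual_basis D F)"
proof -
  obtain z where z: "realizes D F z" using realize_exists[OF finD F] by blast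
  have Pz: "in_H D z \<and> (\<forall>G. forest_in D G \<longrightarrow> form z G = (if G = F then 1 else 0))"
    using z unfolding realizes_def in_H_supp by auto
  have uniq: "x = z" if x: "in_H D x \<and> (\<forall>G. forest_in D G \<longrightarrow> form x G = (if G = F then 1 else 0))" for x
  proof
    fix F0
    define d where "d = (\<lambda>F. x F - z F)"
    have fx: "finite (supp x)" "\<forall>F\<in>supp x. forest_in D F" using x unfolding in_H_supp by auto
    have fz: "finite (supp z)" "\<forall>F\<in>supp z. forest_in D F" using Pz unfolding in_H_supp by auto
    have sd: "supp d \<subseteq> supp x \<union> supp z" unfolding d_def supp_def by auto
    have dH: "in_H D d" unfolding in_H_supp using sd fx finite_subset[OF sd] fz by blast
    have d0: "form d G = 0" if G: "forest_in D G" for G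
    proof -
      have "form x G = (if G = F then 1 else 0)" using x G by blast
      moreover have "form z G = (if G = F then 1 else 0)" using Pz G by blast
      ultimately show ?thesis unfolding d_def form_diff[OF fx(1) fz(1)] by simp
    qed
    have "d F0 = 0" by (rule inj_form[OF finD dH d0])
    then show "x F0 = z F0" unfolding d_def by simp
  qed
  have "dual_basis D F = z"
    unfolding dual_basis_def
  proof (rule the_equality)
    show "in_H D z \<and> (\<forall>G. forest_in D G \<longrightarrow> form z G = (if G = F then 1 else 0))" by (rule Pz)
  next
    fix x assume "in_H D x \<and> (\<forall>G. forest_in D G \<longrightarrow> form x G = (if G = F then 1 else 0))"
    then show "x = z" by (rule uniq)
  qed
  then show ?thesis using z by simp
qed

lemma form_Int: "(\<forall>G. x G \<in> \<int>) \<Longrightarrow> form x H \<in> \<int>"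
  unfolding form_def by (intro Ints_sum Ints_mult pair_Int) auto

lemma db_fin: "finite D \<Longrightarrow> forest_in D F \<Longrightarrow> finite (supp (dual_basis D F))"
  using dual_basis_realizes unfolding realizes_def by blast

lemma db_D: "finite D \<Longrightarrow> forest_in D F \<Longrightarrow> G \<in> supp (dual_basis D F) \<Longrightarrow> forest_in D G"
  using dual_basis_realizes unfolding realizes_def by blast

lemma db_form: "finite D \<Longrightarrow> forest_in D F \<Longrightarrow> form (dual_basis D F) H = (if H = F then 1 else 0)"
  using dual_basis_realizes unfolding realizes_def by blast

lemma db_int: "finite D \<Longrightarrow> forest_in D F \<Longrightarrow> dual_basis D F G \<in> \<int>"
  using dual_basis_realizes unfolding realizes_def by blast

theorem mainTheorem5:
  fixes D :: "'d set"
  assumes "finite D" and "D \<noteq> {}"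
  shows "(\<forall>F. forest_in D F \<longrightarrow> in_A D (dual_basis D F))
    \<and> (\<forall>x. in_A D x \<longrightarrow>
         (\<exists>S (c :: 'd forest \<Rightarrow> int). finite S \<and> (\<forall>F\<in>S. forest_in D F) \<and>
            (\<forall>G. x G = (\<Sum>F\<in>S. of_int (c F) * dual_basis D F G))))
    \<and> (\<forall>S (c :: 'd forest \<Rightarrow> int). finite S \<and> (\<forall>F\<in>S. forest_in D F) \<and>
          (\<forall>G. (\<Sum>F\<in>S. of_int (c F) * dual_basis D F G) = 0)
         \<longrightarrow> (\<forall>F\<in>S. c F = 0))"
proof (intro conjI allI impI)
  note finD = assms(1)
  show "in_A D (dual_basis D F)" if F: "forest_in D F" for F
    unfolding in_A_def in_H_supp using db_fin[OF finD F] db_D[OF finD F] db_int[OF finD F] by blast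
next
  note finD = assms(1)
  fix x assume xA: "in_A D x"
  have xH: "in_H D x" and xI: "\<forall>G. x G \<in> \<int>" using xA unfolding in_A_def by auto
  have fx: "finite (supp x)" "\<forall>F\<in>supp x. forest_in D F" using xH unfolding in_H_supp by auto
  define S where "S = {F. forest_in D F \<and> fw F \<in> fw ` supp x}"
  have SD: "\<And>F. F \<in> S \<Longrightarrow> forest_in D F" unfolding S_def by simp
  have finS: "finite S"
  proof -
    have "S = (\<Union>n\<in>fw ` supp x. {F. forest_in D F \<and> fw F = n})" unfolding S_def by auto
    then show ?thesis using fx(1) finite_forests[OF finD] by auto
  qed
  define c where "c F = floor (form x F)" for F
  have cF: "of_int (c F) = form x F" for F
  proof -
    have "form x F \<in> \<int>" by (rule form_Int[OF xI])
    then show ?thesis unfolding c_def by (metis Ints_cases floor_of_int)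
  qed
  define y where "y = (\<lambda>G. \<Sum>F\<in>S. of_int (c F) * dual_basis D F G)"
  have Sfin: "\<And>F. F \<in> S \<Longrightarrow> finite (supp (dual_basis D F))"
    using db_fin[OF finD] SD by blast
  have yform: "form y H = (\<Sum>F\<in>S. of_int (c F) * form (dual_basis D F) H)" for H
    unfolding y_def by (rule form_lincomb[OF finS Sfin])
  have suppy: "supp y \<subseteq> (\<Union>F\<in>S. supp (dual_basis D F))"
  proof
    fix G assume "G \<in> supp y"
    then have "(\<Sum>F\<in>S. of_int (c F) * dual_basis D F G) \<noteq> 0" by (simp add: supp_def y_def)
    from sum_nz[OF this] obtain F where "F \<in> S" "dual_basis D F G \<noteq> 0" by blast
    then show "G \<in> (\<Union>F\<in>S. supp (dual_basis D F))" by (auto simp: supp_def)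
  qed
  have finy: "finite (supp y)" using finite_subset[OF suppy] finS Sfin by auto
  have Dy: "\<forall>F\<in>supp y. forest_in D F"
    using suppy db_D[OF finD] SD by blast
  define d where "d = (\<lambda>F. x F - y F)"
  have sd: "supp d \<subseteq> supp x \<union> supp y" unfolding d_def supp_def by auto
  have dH: "in_H D d" unfolding in_H_supp using sd fx finy Dy finite_subset[OF sd] by auto
  have d0: "form d H = 0" if H: "forest_in D H" for H
  proof -
    have "form y H = (\<Sum>F\<in>S. of_int (c F) * (if H = F then 1 else 0))"
      unfolding yform by (intro sum.cong[OF refl]) (simp add: db_form[OF finD SD])
    also have "\<dots> = (\<Sum>F\<in>S. if H = F then form x F else 0)"
      by (intro sum.cong[OF refl]) (simp add: cF)
    also have "\<dots> = (if H \<in> S then form x H else 0)"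
      using finS by (simp add: sum.delta')
    also have "\<dots> = form x H"
    proof (cases "H \<in> S")
      case False
      then have nH: "fw H \<notin> fw ` supp x" using H unfolding S_def by auto
      have "\<forall>F\<in>supp x. pair F H = 0"
      proof
        fix F assume F: "F \<in> supp x"
        show "pair F H = 0"
        proof (rule ccontr)
          assume "pair F H \<noteq> 0"
          then have "fw F = fw H" by (rule pair_fw)
          then show False using F nH by (metis image_eqI)
        qed
      qed
      then have "form x H = 0" unfolding form_def supp_def by simp
      then show ?thesis by simp
    qed simp
    finally show ?thesis unfolding d_def form_diff[OF fx(1) finy] by simp
  qed
  have "\<forall>G. x G = y G"
  proof
    fix G have "d G = 0" by (rule inj_form[OF finD dH d0])
    then show "x G = y G" unfolding d_def by simp
  qed
  then show "\<exists>S (c :: 'd forest \<Rightarrow> int). finite S \<and> (\<forall>F\<in>S. forest_in D F) \<and>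
            (\<forall>G. x G = (\<Sum>F\<in>S. of_int (c F) * dual_basis D F G))"
    using finS SD unfolding y_def by blast
next
  note finD = assms(1)
  fix S and c :: "'d forest \<Rightarrow> int"
  assume h: "finite S \<and> (\<forall>F\<in>S. forest_in D F) \<and> (\<forall>G. (\<Sum>F\<in>S. of_int (c F) * dual_basis D F G) = 0)"
  have finS: "finite S" and DS: "\<And>F. F \<in> S \<Longrightarrow> forest_in D F" using h by auto
  have Sfin: "\<And>F. F \<in> S \<Longrightarrow> finite (supp (dual_basis D F))"
    using db_fin[OF finD] DS by blast
  show "\<forall>F\<in>S. c F = 0"
  proof
    fix F0 assume F0: "F0 \<in> S"
    have z: "(\<lambda>G. \<Sum>F\<in>S. of_int (c F) * dual_basis D F G) = (\<lambda>_. 0)" using h by auto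
    have "form (\<lambda>G. \<Sum>F\<in>S. of_int (c F) * dual_basis D F G) F0 = (\<Sum>F\<in>S. of_int (c F) * form (dual_basis D F) F0)"
      by (rule form_lincomb[OF finS Sfin])
    also have "\<dots> = (\<Sum>F\<in>S. if F0 = F then of_int (c F) else 0)"
      by (intro sum.cong[OF refl]) (simp add: db_form[OF finD DS])
    also have "\<dots> = of_int (c F0)" using finS F0 by (simp add: sum.delta')
    finally have "of_int (c F0) = form (\<lambda>_. 0 :: rat) F0" unfolding z by simp
    also have "\<dots> = 0" by (simp add: form_def)
    finally show "c F0 = 0" by simp
  qed
qed

end
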